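(* Let $0\le r,s\le n$ and $\mathbf c_1,\mathbf c_2,\mathbf c_1',\mathbf c_2'\in\mathrm{GF}(q^m)^n$ with $d_{\mathrm R}(\mathbf c_1,\mathbf c_2)>d_{\mathrm R}(\mathbf c_1',\mathbf c_2')$. Then $$|B_r(\mathbf c_1)\cap B_s(\mathbf c_2)|\le |B_r(\mathbf c_1')\cap B_s(\mathbf c_2')|.$$
   Context: The rank $\mathrm{rk}(\mathbf x)$ of $\mathbf x\in\mathrm{GF}(q^m)^n$ is the maximum number of its coordinates linearly independent over $\mathrm{GF}(q)$, and $d_{\mathrm R}(\mathbf x,\mathbf y)=\mathrm{rk}(\mathbf x-\mathbf y)$. $B_r(\mathbf x)=\{\mathbf y\in\mathrm{GF}(q^m)^n: d_{\mathrm R}(\mathbf x,\mathbf y)\le r\}$ is the ball of rank radius $r$ centered at $\mathbf x$. *)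

theory Defs
  imports "HOL-Library.FuncSet"
begin

text \<open>GF(q^m) is modelled as an arbitrary finite field type 'a, and GF(q) as a subfield F of it
  (then q = card F and m = the degree of 'a over F).\<close>

definition subfield :: "'a::field set \<Rightarrow> bool" where
  "subfield F \<longleftrightarrow> 0 \<in> F \<and> 1 \<in> F \<and>
     (\<forall>a\<in>F. \<forall>b\<in>F. a + b \<in> F \<and> a * b \<in> F) \<and>
     (\<forall>a\<in>F. - a \<in> F) \<and> (\<forall>a\<in>F. a \<noteq> 0 \<longrightarrow> inverse a \<in> F)"

definition vecs :: "nat \<Rightarrow> (nat \<Rightarrow> 'a) set" where
  "vecs n = PiE {..<n} (\<lambda>_. UNIV)"

definition lin_indep_over :: "'a::field set \<Rightarrow> (nat \<Rightarrow> 'a) \<Rightarrow> nat set \<Rightarrow> bool" where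
  "lin_indep_over F x I \<longleftrightarrow>
     (\<forall>c. (\<forall>i\<in>I. c i \<in> F) \<longrightarrow> (\<Sum>i\<in>I. c i * x i) = 0 \<longrightarrow> (\<forall>i\<in>I. c i = 0))"

definition rk :: "'a::field set \<Rightarrow> nat \<Rightarrow> (nat \<Rightarrow> 'a) \<Rightarrow> nat" where
  "rk F n x = Max {card I | I. I \<subseteq> {..<n} \<and> lin_indep_over F x I}"

definition rank_dist :: "'a::field set \<Rightarrow> nat \<Rightarrow> (nat \<Rightarrow> 'a) \<Rightarrow> (nat \<Rightarrow> 'a) \<Rightarrow> nat" where
  "rank_dist F n x y = rk F n (\<lambda>i. x i - y i)"

definition rank_ball :: "'a::field set \<Rightarrow> nat \<Rightarrow> nat \<Rightarrow> (nat \<Rightarrow> 'a) \<Rightarrow> (nat \<Rightarrow> 'a) set" where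
  "rank_ball F n r x = {y \<in> vecs n. rank_dist F n x y \<le> r}"

end

theory Submission
  imports Defs
begin

definition indep :: "'a::field set \<Rightarrow> ('i \<Rightarrow> 'a) \<Rightarrow> 'i set \<Rightarrow> bool" where
  "indep F x I \<longleftrightarrow> (\<forall>c. (\<forall>i\<in>I. c i \<in> F) \<longrightarrow> (\<Sum>i\<in>I. c i * x i) = 0 \<longrightarrow> (\<forall>i\<in>I. c i = 0))"

lemma lin_indep_over_eq: "lin_indep_over F x I = indep F x I"
  by (simp add: lin_indep_over_def indep_def)

lemma indepD: "indep F x I \<Longrightarrow> (\<forall>i\<in>I. c i \<in> F) \<Longrightarrow> (\<Sum>i\<in>I. c i * x i) = 0 \<Longrightarrow> \<forall>i\<in>I. c i = 0"
  unfolding indep_def by blast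

definition spn :: "'a::field set \<Rightarrow> ('i \<Rightarrow> 'a) \<Rightarrow> 'i set \<Rightarrow> 'a set" where
  "spn F x I = {(\<Sum>i\<in>I. c i * x i) | c. \<forall>i\<in>I. c i \<in> F}"

definition subsp :: "'a::field set \<Rightarrow> 'a set \<Rightarrow> bool" where
  "subsp F W \<longleftrightarrow> 0 \<in> W \<and> (\<forall>a\<in>W. \<forall>b\<in>W. a + b \<in> W) \<and> (\<forall>k\<in>F. \<forall>a\<in>W. k * a \<in> W)"

lemma sfE:
  assumes "subfield F"
  shows "0 \<in> F" "1 \<in> F" "a \<in> F \<Longrightarrow> b \<in> F \<Longrightarrow> a + b \<in> F" "a \<in> F \<Longrightarrow> b \<in> F \<Longrightarrow> a * b \<in> F"
    "a \<in> F \<Longrightarrow> - a \<in> F" "a \<in> F \<Longrightarrow> inverse a \<in> F" "a \<in> F \<Longrightarrow> b \<in> F \<Longrightarrow> a - b \<in> F"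
proof -
  have h: "0 \<in> F" "1 \<in> F" "\<forall>a\<in>F. \<forall>b\<in>F. a + b \<in> F \<and> a * b \<in> F"
    "\<forall>a\<in>F. - a \<in> F" "\<forall>a\<in>F. a \<noteq> 0 \<longrightarrow> inverse a \<in> F"
    using assms unfolding subfield_def by auto
  show "0 \<in> F" "1 \<in> F" using h by blast+
  show "a \<in> F \<Longrightarrow> b \<in> F \<Longrightarrow> a + b \<in> F" "a \<in> F \<Longrightarrow> b \<in> F \<Longrightarrow> a * b \<in> F"
    "a \<in> F \<Longrightarrow> - a \<in> F" using h by blast+
  show "a \<in> F \<Longrightarrow> inverse a \<in> F"
  proof (cases "a = 0")
    case True then show ?thesis using h(1) by simp
  next
    case False then show "a \<in> F \<Longrightarrow> inverse a \<in> F" using h(5) by blast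
  qed
  show "a \<in> F \<Longrightarrow> b \<in> F \<Longrightarrow> a - b \<in> F"
  proof -
    assume "a \<in> F" "b \<in> F"
    then have "a + - b \<in> F" using h(3,4) by blast
    then show "a - b \<in> F" by simp
  qed
qed

lemma subsp_neg: "subfield F \<Longrightarrow> subsp F W \<Longrightarrow> a \<in> W \<Longrightarrow> - a \<in> W"
proof -
  assume a: "subfield F" "subsp F W" "a \<in> W"
  have "- 1 \<in> F" using sfE(5)[OF a(1) sfE(2)[OF a(1)]] .
  then have "(- 1) * a \<in> W" using a(2,3) unfolding subsp_def by blast
  then show "- a \<in> W" by simp
qed

lemma subsp_add: "subsp F W \<Longrightarrow> a \<in> W \<Longrightarrow> b \<in> W \<Longrightarrow> a + b \<in> W"
  unfolding subsp_def by blast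

lemma subsp_diff: "subfield F \<Longrightarrow> subsp F W \<Longrightarrow> a \<in> W \<Longrightarrow> b \<in> W \<Longrightarrow> a - b \<in> W"
  by (metis diff_conv_add_uminus subsp_add subsp_neg)

lemma subsp_sum:
  assumes "subsp F W" "\<forall>i\<in>I. c i \<in> F \<and> x i \<in> W"
  shows "(\<Sum>i\<in>I. c i * x i) \<in> W"
  using assms(2)
proof (induction I rule: infinite_finite_induct)
  case (infinite A) then show ?case using assms(1) by (simp add: subsp_def)
next
  case empty then show ?case using assms(1) by (simp add: subsp_def)
next
  case (insert a A)
  then show ?case using assms(1) unfolding subsp_def by simp
qed

lemma spn_subsp:
  assumes "subfield F"
  shows "subsp F (spn F x I)"
  unfolding subsp_def spn_def
proof (intro conjI ballI)
  show "0 \<in> {\<Sum>i\<in>I. c i * x i |c. \<forall>i\<in>I. c i \<in> F}"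
    by (rule CollectI, rule exI[of _ "\<lambda>_. 0"]) (simp add: sfE[OF assms])
next
  fix a b assume "a \<in> {\<Sum>i\<in>I. c i * x i |c. \<forall>i\<in>I. c i \<in> F}" "b \<in> {\<Sum>i\<in>I. c i * x i |c. \<forall>i\<in>I. c i \<in> F}"
  then obtain c d where "a = (\<Sum>i\<in>I. c i * x i)" "\<forall>i\<in>I. c i \<in> F" "b = (\<Sum>i\<in>I. d i * x i)" "\<forall>i\<in>I. d i \<in> F"
    by blast
  then show "a + b \<in> {\<Sum>i\<in>I. c i * x i |c. \<forall>i\<in>I. c i \<in> F}"
  proof (intro CollectI exI[of _ "\<lambda>i. c i + d i"] conjI)
    show "a + b = (\<Sum>i\<in>I. (c i + d i) * x i)" using \<open>a = _\<close> \<open>b = _\<close>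
      by (simp add: sum.distrib distrib_right)
    show "\<forall>i\<in>I. c i + d i \<in> F" using \<open>\<forall>i\<in>I. c i \<in> F\<close> \<open>\<forall>i\<in>I. d i \<in> F\<close> sfE(3)[OF assms] by blast
  qed
next
  fix k a assume k: "k \<in> F" and "a \<in> {\<Sum>i\<in>I. c i * x i |c. \<forall>i\<in>I. c i \<in> F}"
  then obtain c where "a = (\<Sum>i\<in>I. c i * x i)" "\<forall>i\<in>I. c i \<in> F" by blast
  then show "k * a \<in> {\<Sum>i\<in>I. c i * x i |c. \<forall>i\<in>I. c i \<in> F}"
  proof (intro CollectI exI[of _ "\<lambda>i. k * c i"] conjI)
    show "k * a = (\<Sum>i\<in>I. (k * c i) * x i)" using \<open>a = _\<close>
      by (simp add: sum_distrib_left mult.assoc)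
    show "\<forall>i\<in>I. k * c i \<in> F" using k \<open>\<forall>i\<in>I. c i \<in> F\<close> sfE(4)[OF assms] by blast
  qed
qed

lemma spn_mem:
  assumes "subfield F" "i \<in> I" "finite I"
  shows "x i \<in> spn F x I"
  unfolding spn_def
proof (intro CollectI exI[of _ "\<lambda>k. if k = i then 1 else 0"] conjI)
  have "(\<Sum>k\<in>I. (if k = i then 1 else 0) * x k) = (\<Sum>k\<in>I. if k = i then x k else 0)"
    by (rule sum.cong) auto
  also have "\<dots> = x i" using assms by simp
  finally show "x i = (\<Sum>k\<in>I. (if k = i then 1 else 0) * x k)" by simp
qed (use sfE[OF assms(1)] in auto)

lemma spn_least:
  assumes "subsp F W" "\<forall>i\<in>I. x i \<in> W"
  shows "spn F x I \<subseteq> W"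
proof
  fix v assume "v \<in> spn F x I"
  then obtain c where c: "v = (\<Sum>i\<in>I. c i * x i)" "\<forall>i\<in>I. c i \<in> F" unfolding spn_def by blast
  then show "v \<in> W" using subsp_sum[OF assms(1), of I c x] assms(2) by simp
qed

lemma spn_mono:
  assumes "subfield F" "I \<subseteq> J" "finite J"
  shows "spn F x I \<subseteq> spn F x J"
proof (rule spn_least[OF spn_subsp[OF assms(1)]], rule ballI)
  fix i assume "i \<in> I"
  then show "x i \<in> spn F x J" using spn_mem[OF assms(1), of i J x] assms(2,3) by blast
qed

lemma spn_cong: "(\<And>i. i \<in> I \<Longrightarrow> x i = y i) \<Longrightarrow> spn F x I = spn F y I"
proof -
  assume h: "\<And>i. i \<in> I \<Longrightarrow> x i = y i"
  have "\<And>c. (\<Sum>i\<in>I. c i * x i) = (\<Sum>i\<in>I. c i * y i)" using h by (intro sum.cong) auto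
  then show ?thesis unfolding spn_def by simp
qed

lemma indep_cong: "(\<And>i. i \<in> I \<Longrightarrow> x i = y i) \<Longrightarrow> indep F x I = indep F y I"
proof -
  assume h: "\<And>i. i \<in> I \<Longrightarrow> x i = y i"
  have "\<And>c. (\<Sum>i\<in>I. c i * x i) = (\<Sum>i\<in>I. c i * y i)" using h by (intro sum.cong) auto
  then show ?thesis unfolding indep_def by simp
qed

lemma comb_inj:
  assumes "subfield F" "indep F x I"
  shows "inj_on (\<lambda>c. \<Sum>i\<in>I. c i * x i) (PiE I (\<lambda>_. F))"
proof (rule inj_onI)
  fix c d assume c: "c \<in> PiE I (\<lambda>_. F)" and d: "d \<in> PiE I (\<lambda>_. F)"
    and eq: "(\<Sum>i\<in>I. c i * x i) = (\<Sum>i\<in>I. d i * x i)"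
  have "(\<Sum>i\<in>I. (c i - d i) * x i) = 0"
    using eq by (simp add: left_diff_distrib sum_subtractf)
  moreover have "\<forall>i\<in>I. c i - d i \<in> F" using c d sfE(7)[OF assms(1)] by auto
  ultimately have "\<forall>i\<in>I. c i - d i = 0" using indepD[OF assms(2), of "\<lambda>i. c i - d i"] by blast
  then show "c = d" using c d by (intro PiE_ext) auto
qed

lemma spn_image:
  "spn F x I = (\<lambda>c. \<Sum>i\<in>I. c i * x i) ` (PiE I (\<lambda>_. F))"
proof
  show "spn F x I \<subseteq> (\<lambda>c. \<Sum>i\<in>I. c i * x i) ` (PiE I (\<lambda>_. F))"
  proof
    fix v assume "v \<in> spn F x I"
    then obtain c where c: "v = (\<Sum>i\<in>I. c i * x i)" "\<forall>i\<in>I. c i \<in> F" unfolding spn_def by blast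
    have "restrict c I \<in> PiE I (\<lambda>_. F)" using c by auto
    moreover have "v = (\<Sum>i\<in>I. restrict c I i * x i)" using c by simp
    ultimately show "v \<in> (\<lambda>c. \<Sum>i\<in>I. c i * x i) ` (PiE I (\<lambda>_. F))" by blast
  qed
next
  show "(\<lambda>c. \<Sum>i\<in>I. c i * x i) ` (PiE I (\<lambda>_. F)) \<subseteq> spn F x I"
  proof
    fix v assume "v \<in> (\<lambda>c. \<Sum>i\<in>I. c i * x i) ` (PiE I (\<lambda>_. F))"
    then obtain c where c: "c \<in> PiE I (\<lambda>_. F)" "v = (\<Sum>i\<in>I. c i * x i)" by blast
    then have "\<forall>i\<in>I. c i \<in> F" by auto
    then show "v \<in> spn F x I" unfolding spn_def using c(2) by blast
  qed
qed

lemma card_spn: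
  assumes "subfield F" "finite (F::'a::field set)" "finite I" "indep F x I"
  shows "card (spn F x I) = card F ^ card I"
  unfolding spn_image
  by (subst card_image[OF comb_inj[OF assms(1,4)]]) (simp add: card_PiE assms)

lemma indep_insert:
  assumes sf: "subfield F" and "finite I" "i \<notin> I" "indep F x I" "x i \<notin> spn F x I"
  shows "indep F x (insert i I)"
  unfolding indep_def
proof (intro allI impI)
  fix c assume cF: "\<forall>k\<in>insert i I. c k \<in> F" and s: "(\<Sum>k\<in>insert i I. c k * x k) = 0"
  have s2: "c i * x i + (\<Sum>k\<in>I. c k * x k) = 0" using s assms(2,3) by simp
  have ci: "c i = 0"
  proof (rule ccontr)
    assume nz: "c i \<noteq> 0"
    have "x i = (\<Sum>k\<in>I. (- (c k * inverse (c i))) * x k)"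
    proof -
      have "(\<Sum>k\<in>I. (- (c k * inverse (c i))) * x k) = (\<Sum>k\<in>I. (- inverse (c i)) * (c k * x k))"
        by (intro sum.cong refl) (simp add: mult_ac)
      also have "\<dots> = - inverse (c i) * (\<Sum>k\<in>I. c k * x k)"
        by (simp only: sum_distrib_left)
      also have "\<dots> = - inverse (c i) * (- (c i * x i))"
      proof -
        have "(\<Sum>k\<in>I. c k * x k) = - (c i * x i)" using s2 by (metis add.commute add_eq_0_iff2)
        then show ?thesis by simp
      qed
      also have "\<dots> = x i" using nz by simp
      finally show ?thesis by simp
    qed
    moreover have "\<forall>k\<in>I. - (c k * inverse (c i)) \<in> F"
    proof
      fix k assume "k \<in> I"
      then have "c k \<in> F" "c i \<in> F" using cF by auto
      then show "- (c k * inverse (c i)) \<in> F" using sfE(4,5,6)[OF sf] by blast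
    qed
    ultimately have "x i \<in> spn F x I" unfolding spn_def
      by (intro CollectI exI[of _ "\<lambda>k. - (c k * inverse (c i))"]) blast
    then show False using assms(5) by simp
  qed
  then have "(\<Sum>k\<in>I. c k * x k) = 0" using s2 by simp
  then have "\<forall>k\<in>I. c k = 0" using indepD[OF assms(4), of c] cF by blast
  then show "\<forall>k\<in>insert i I. c k = 0" using ci by simp
qed

lemma lin_indep_empty: "lin_indep_over F x {}"
  by (simp add: lin_indep_over_def)

lemma rk_facts:
  fixes x :: "nat \<Rightarrow> 'a::field"
  shows "finite {card I | I. I \<subseteq> {..<n} \<and> lin_indep_over F x I}"
    and "rk F n x \<in> {card I | I. I \<subseteq> {..<n} \<and> lin_indep_over F x I}"
proof -
  let ?M = "{card I | I. I \<subseteq> {..<n} \<and> lin_indep_over F x I}"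
  have "?M \<subseteq> {..n}"
  proof
    fix m assume "m \<in> ?M"
    then obtain I where I: "m = card I" "I \<subseteq> {..<n}" by blast
    then have "m \<le> n" using card_mono[of "{..<n}" I] by simp
    then show "m \<in> {..n}" by simp
  qed
  then show fin: "finite ?M" using finite_subset by blast
  have "card {} \<in> ?M" using lin_indep_empty[of F x] by (intro CollectI exI[of _ "{}"]) simp
  then have "?M \<noteq> {}" by blast
  then show "rk F n x \<in> ?M" unfolding rk_def using Max_in[OF fin] by blast
qed

lemma rk_ge:
  assumes "I \<subseteq> {..<n}" "indep F x I"
  shows "card I \<le> rk F n x"
  unfolding rk_def
  by (rule Max_ge[OF rk_facts(1)]) (use assms lin_indep_over_eq in blast)

lemma rk_witness:
  fixes x :: "nat \<Rightarrow> 'a::field"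
  assumes sf: "subfield F"
  shows "\<exists>I. I \<subseteq> {..<n} \<and> indep F x I \<and> card I = rk F n x \<and> (\<forall>j<n. x j \<in> spn F x I)"
proof -
  obtain I where I: "rk F n x = card I" "I \<subseteq> {..<n}" "lin_indep_over F x I"
    using rk_facts(2)[of F n x] by blast
  have fI: "finite I" using I(2) finite_subset by blast
  have "x j \<in> spn F x I" if j: "j < n" for j
  proof (rule ccontr)
    assume nin: "x j \<notin> spn F x I"
    then have "j \<notin> I" using spn_mem[OF sf _ fI] by blast
    then have "indep F x (insert j I)"
      using indep_insert[OF sf fI _ _ nin] I(3) lin_indep_over_eq by metis
    then have "card (insert j I) \<le> rk F n x" using rk_ge[of "insert j I" n F x] I(2) j by simp
    then show False using \<open>j \<notin> I\<close> fI I(1) by simp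
  qed
  then show ?thesis using I lin_indep_over_eq by metis
qed

lemma card_F_gt1:
  assumes "subfield (F::'a::{field,finite} set)"
  shows "1 < card F"
proof -
  have "{0,1} \<subseteq> F" using sfE(1,2)[OF assms] by blast
  then have "card {0::'a,1} \<le> card F" by (rule card_mono[OF finite])
  then show ?thesis by simp
qed

lemma card_S:
  fixes x :: "nat \<Rightarrow> 'a::{field,finite}"
  assumes sf: "subfield F"
  shows "card (spn F x {..<n}) = card F ^ rk F n x"
proof -
  obtain I where I: "I \<subseteq> {..<n}" "indep F x I" "card I = rk F n x" "\<forall>j<n. x j \<in> spn F x I"
    using rk_witness[OF sf] by blast
  have "spn F x I = spn F x {..<n}"
  proof
    show "spn F x I \<subseteq> spn F x {..<n}" by (rule spn_mono[OF sf I(1)]) simp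
    show "spn F x {..<n} \<subseteq> spn F x I"
      by (rule spn_least[OF spn_subsp[OF sf]]) (use I(4) in auto)
  qed
  moreover have "finite I" using I(1) finite_subset by blast
  ultimately show ?thesis using card_spn[OF sf finite _ I(2)] I(3) by metis
qed

lemma rk_eqI:
  fixes x :: "nat \<Rightarrow> 'a::{field,finite}"
  assumes sf: "subfield F" and "card (spn F x {..<n}) = card F ^ k"
  shows "rk F n x = k"
  using card_S[OF sf, of x n] assms(2) power_inject_exp[OF card_F_gt1[OF sf]] by metis

lemma rk_cong:
  fixes x :: "nat \<Rightarrow> 'a::{field,finite}"
  assumes sf: "subfield F" and "\<And>i. i < n \<Longrightarrow> x i = y i"
  shows "rk F n x = rk F n y"
proof -
  have "spn F x {..<n} = spn F y {..<n}" using assms(2) by (intro spn_cong) auto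
  then show ?thesis using rk_eqI[OF sf] card_S[OF sf] by metis
qed

lemma sum_upd:
  fixes z :: "nat \<Rightarrow> 'a::field"
  assumes "j < n" "z j = 0"
  shows "(\<Sum>i<n. c i * (z(j:=v)) i) = (\<Sum>i<n. c i * z i) + c j * v"
proof -
  have j: "j \<in> {..<n}" using assms by simp
  have "(\<Sum>i<n. c i * (z(j:=v)) i) = c j * (z(j:=v)) j + (\<Sum>i\<in>{..<n}-{j}. c i * (z(j:=v)) i)"
    by (rule sum.remove[OF finite_lessThan j])
  also have "c j * (z(j:=v)) j = c j * v" by simp
  also have "(\<Sum>i\<in>{..<n}-{j}. c i * (z(j:=v)) i) = (\<Sum>i\<in>{..<n}-{j}. c i * z i)"
    by (rule sum.cong) auto
  also have "(\<Sum>i<n. c i * z i) = c j * z j + (\<Sum>i\<in>{..<n}-{j}. c i * z i)"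
    by (rule sum.remove[OF finite_lessThan j])
  then have "(\<Sum>i\<in>{..<n}-{j}. c i * z i) = (\<Sum>i<n. c i * z i)" using assms(2) by simp
  finally show ?thesis by (simp add: add.commute)
qed

lemma sum_upd2:
  fixes z :: "nat \<Rightarrow> 'a::field"
  assumes "z j = 0"
  shows "(\<Sum>i<n. (c(j:=k)) i * z i) = (\<Sum>i<n. c i * z i)"
  by (rule sum.cong) (use assms in auto)

lemma spn_upd:
  fixes z :: "nat \<Rightarrow> 'a::field"
  assumes sf: "subfield F" and "j < n" "z j = 0"
  shows "spn F (z(j:=v)) {..<n} = {w + k * v | w k. w \<in> spn F z {..<n} \<and> k \<in> F}"
proof
  show "spn F (z(j:=v)) {..<n} \<subseteq> {w + k * v | w k. w \<in> spn F z {..<n} \<and> k \<in> F}"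
  proof
    fix u assume "u \<in> spn F (z(j:=v)) {..<n}"
    then obtain c where c: "u = (\<Sum>i<n. c i * (z(j:=v)) i)" "\<forall>i\<in>{..<n}. c i \<in> F"
      unfolding spn_def by blast
    have "u = (\<Sum>i<n. c i * z i) + c j * v" using c(1) sum_upd[where j=j and n=n and z=z, OF assms(2,3)] by simp
    moreover have "(\<Sum>i<n. c i * z i) \<in> spn F z {..<n}" unfolding spn_def using c(2) by blast
    moreover have "c j \<in> F" using c(2) assms(2) by simp
    ultimately show "u \<in> {w + k * v | w k. w \<in> spn F z {..<n} \<and> k \<in> F}" by blast
  qed
  show "{w + k * v | w k. w \<in> spn F z {..<n} \<and> k \<in> F} \<subseteq> spn F (z(j:=v)) {..<n}"
  proof
    fix u assume "u \<in> {w + k * v | w k. w \<in> spn F z {..<n} \<and> k \<in> F}"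
    then obtain w k where wk: "u = w + k * v" "w \<in> spn F z {..<n}" "k \<in> F" by blast
    then obtain c where c: "w = (\<Sum>i<n. c i * z i)" "\<forall>i\<in>{..<n}. c i \<in> F"
      unfolding spn_def by blast
    have "u = (\<Sum>i<n. (c(j:=k)) i * (z(j:=v)) i)"
      using sum_upd[where j=j and n=n and z=z and c="c(j:=k)" and v=v, OF assms(2,3)] sum_upd2[where j=j and z=z and n=n and c=c and k=k, OF assms(3)] wk(1) c(1) by simp
    moreover have "\<forall>i\<in>{..<n}. (c(j:=k)) i \<in> F" using c(2) wk(3) by simp
    ultimately show "u \<in> spn F (z(j:=v)) {..<n}" unfolding spn_def by blast
  qed
qed

lemma rk_upd:
  fixes z :: "nat \<Rightarrow> 'a::{field,finite}"
  assumes sf: "subfield F" and "j < n" "z j = 0"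
  shows "rk F n (z(j:=v)) = rk F n z + (if v \<in> spn F z {..<n} then 0 else 1)"
proof (cases "v \<in> spn F z {..<n}")
  case True
  have "spn F (z(j:=v)) {..<n} = spn F z {..<n}"
  proof
    show "spn F (z(j:=v)) {..<n} \<subseteq> spn F z {..<n}"
    proof
      fix u assume "u \<in> spn F (z(j:=v)) {..<n}"
      then obtain w k where wk: "u = w + k * v" "w \<in> spn F z {..<n}" "k \<in> F"
        unfolding spn_upd[where j=j and n=n and z=z, OF assms] by blast
      have "k * v \<in> spn F z {..<n}" using spn_subsp[OF sf] True wk(3) unfolding subsp_def by blast
      then show "u \<in> spn F z {..<n}" using subsp_add[OF spn_subsp[OF sf] wk(2)] wk(1) by simp
    qed
    show "spn F z {..<n} \<subseteq> spn F (z(j:=v)) {..<n}"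
    proof
      fix u assume "u \<in> spn F z {..<n}"
      moreover have "u = u + 0 * v" by simp
      ultimately show "u \<in> spn F (z(j:=v)) {..<n}" unfolding spn_upd[where j=j and n=n and z=z, OF assms] using sfE(1)[OF sf] by blast
    qed
  qed
  then have "card (spn F (z(j:=v)) {..<n}) = card F ^ rk F n z" using card_S[OF sf, of z n] by simp
  then show ?thesis using True rk_eqI[OF sf] by simp
next
  case False
  have eq: "spn F (z(j:=v)) {..<n} = (\<lambda>(k, w). w + k * v) ` (F \<times> spn F z {..<n})"
    unfolding spn_upd[where j=j and n=n and z=z, OF assms] by auto
  have inj: "inj_on (\<lambda>(k, w). w + k * v) (F \<times> spn F z {..<n})"
  proof (rule inj_onI, clarify)
    fix k w k' w' assume h: "k \<in> F" "w \<in> spn F z {..<n}" "k' \<in> F" "w' \<in> spn F z {..<n}"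
      "w + k * v = w' + k' * v"
    show "k = k' \<and> w = w'"
    proof (cases "k = k'")
      case True then show ?thesis using h(5) by simp
    next
      case ne: False
      have "(k - k') * v = w' - w" using h(5) by (simp add: algebra_simps)
      then have "v = inverse (k - k') * (w' - w)" using ne by (simp add: field_simps)
      moreover have "w' - w \<in> spn F z {..<n}" using subsp_diff[OF sf spn_subsp[OF sf] h(4,2)] .
      moreover have "inverse (k - k') \<in> F" using sfE(6,7)[OF sf] h(1,3) by blast
      ultimately have "v \<in> spn F z {..<n}" using spn_subsp[OF sf] unfolding subsp_def by metis
      then show ?thesis using False by simp
    qed
  qed
  have "card (spn F (z(j:=v)) {..<n}) = card F * card (spn F z {..<n})"
    unfolding eq card_image[OF inj] card_cartesian_product ..
  also have "\<dots> = card F ^ (rk F n z + 1)" using card_S[OF sf] by simp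
  finally show ?thesis using False rk_eqI[OF sf] by simp
qed

definition fib :: "'a::field set \<Rightarrow> 'a set \<Rightarrow> nat \<Rightarrow> nat \<Rightarrow> nat \<Rightarrow> nat \<Rightarrow> 'a \<Rightarrow> 'a set" where
  "fib W W2 A B r s a = {x. A + (if x \<in> W then 0 else 1) \<le> r \<and> B + (if x - a \<in> W2 then 0 else 1) \<le> s}"

lemma card_shift:
  fixes W2 :: "'a::{field,finite} set"
  shows "card {x. x - a \<in> W2} = card W2"
proof -
  have "{x. x - a \<in> W2} = (\<lambda>y. y + a) ` W2"
  proof
    show "{x. x - a \<in> W2} \<subseteq> (\<lambda>y. y + a) ` W2"
    proof
      fix x assume "x \<in> {x. x - a \<in> W2}"
      then have "x - a \<in> W2" "x = (x - a) + a" by simp_all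
      then show "x \<in> (\<lambda>y. y + a) ` W2" by blast
    qed
  qed auto
  moreover have "inj_on (\<lambda>y. y + a) W2" by (rule inj_onI) simp
  ultimately show ?thesis by (simp add: card_image)
qed

lemma fib_card_eq:
  fixes W W2 :: "'a::{field,finite} set"
  assumes "\<not> (A = r \<and> B = s)"
  shows "card (fib W W2 A B r s a) = card (fib W W2 A B r s b)"
proof -
  consider "\<not> (A \<le> r \<and> B \<le> s)" | "A < r \<and> B < s" | "A < r \<and> B = s" | "A = r \<and> B < s"
    using assms by linarith
  then show ?thesis
  proof cases
    case 1
    then have "fib W W2 A B r s a = {}" "fib W W2 A B r s b = {}" unfolding fib_def by auto
    then show ?thesis by simp
  next
    case 2
    then have "fib W W2 A B r s a = UNIV" "fib W W2 A B r s b = UNIV" unfolding fib_def by auto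
    then show ?thesis by simp
  next
    case 3
    then have "fib W W2 A B r s a = {x. x - a \<in> W2}" "fib W W2 A B r s b = {x. x - b \<in> W2}"
      unfolding fib_def by auto
    then show ?thesis using card_shift[of a W2] card_shift[of b W2] by simp
  next
    case 4
    then have "fib W W2 A B r s a = W" "fib W W2 A B r s b = W"
      unfolding fib_def by auto
    then show ?thesis by simp
  qed
qed

lemma fib_card_le:
  fixes W W2 :: "'a::{field,finite} set"
  assumes sf: "subfield F" and W: "subsp F W" and W2: "subsp F W2"
  shows "card (fib W W2 A B r s a) \<le> card (fib W W2 A B r s 0)"
proof (cases "A = r \<and> B = s")
  case False then show ?thesis using fib_card_eq by (metis order_refl)
next
  case True
  then have e: "\<And>a. fib W W2 A B r s a = {x. x \<in> W \<and> x - a \<in> W2}" unfolding fib_def by auto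
  show ?thesis
  proof (cases "fib W W2 A B r s a = {}")
    case True then show ?thesis by simp
  next
    case False
    then obtain x0 where x0: "x0 \<in> W" "x0 - a \<in> W2" unfolding e by blast
    have "card {x. x \<in> W \<and> x - a \<in> W2} \<le> card {x. x \<in> W \<and> x - 0 \<in> W2}"
    proof (rule card_inj_on_le[where f = "\<lambda>x. x - x0"])
      show "inj_on (\<lambda>x. x - x0) {x. x \<in> W \<and> x - a \<in> W2}" by (rule inj_onI) simp
      show "(\<lambda>x. x - x0) ` {x. x \<in> W \<and> x - a \<in> W2} \<subseteq> {x. x \<in> W \<and> x - 0 \<in> W2}"
      proof
        fix y assume "y \<in> (\<lambda>x. x - x0) ` {x. x \<in> W \<and> x - a \<in> W2}"
        then obtain x where x: "x \<in> W" "x - a \<in> W2" "y = x - x0" by blast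
        have "y \<in> W" using subsp_diff[OF sf W x(1) x0(1)] x(3) by simp
        moreover have "(x - a) - (x0 - a) \<in> W2" using subsp_diff[OF sf W2 x(2) x0(2)] .
        then have "y - 0 \<in> W2" using x(3) by simp
        ultimately show "y \<in> {x. x \<in> W \<and> x - 0 \<in> W2}" by simp
      qed
    qed simp
    then show ?thesis unfolding e .
  qed
qed

lemma fib_card_ge:
  fixes W W2 :: "'a::{field,finite} set"
  assumes sf: "subfield F" and W: "subsp F W" and W2: "subsp F W2"
    and w: "w \<in> W" "w2 \<in> W2" "a = w + w2"
  shows "card (fib W W2 A B r s 0) \<le> card (fib W W2 A B r s a)"
proof (cases "A = r \<and> B = s")
  case False then show ?thesis using fib_card_eq by (metis order_refl)
next
  case True
  then have e: "\<And>a. fib W W2 A B r s a = {x. x \<in> W \<and> x - a \<in> W2}" unfolding fib_def by auto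
  have "card {x. x \<in> W \<and> x - 0 \<in> W2} \<le> card {x. x \<in> W \<and> x - a \<in> W2}"
  proof (rule card_inj_on_le[where f = "\<lambda>x. x + w"])
    show "inj_on (\<lambda>x. x + w) {x. x \<in> W \<and> x - 0 \<in> W2}" by (rule inj_onI) simp
    show "(\<lambda>x. x + w) ` {x. x \<in> W \<and> x - 0 \<in> W2} \<subseteq> {x. x \<in> W \<and> x - a \<in> W2}"
    proof
      fix y assume "y \<in> (\<lambda>x. x + w) ` {x. x \<in> W \<and> x - 0 \<in> W2}"
      then obtain x where x: "x \<in> W" "x \<in> W2" "y = x + w" by auto
      have "y \<in> W" using subsp_add[OF W x(1) w(1)] x(3) by simp
      moreover have "x - w2 \<in> W2" using subsp_diff[OF sf W2 x(2) w(2)] .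
      then have "y - a \<in> W2" using x(3) w(3) by (simp add: algebra_simps)
      ultimately show "y \<in> {x. x \<in> W \<and> x - a \<in> W2}" by simp
    qed
  qed simp
  then show ?thesis unfolding e .
qed

definition Gs :: "'a::field set \<Rightarrow> nat \<Rightarrow> nat \<Rightarrow> nat \<Rightarrow> (nat \<Rightarrow> 'a) \<Rightarrow> (nat \<Rightarrow> 'a) set" where
  "Gs F n r s u = {y \<in> vecs n. rk F n y \<le> r \<and> rk F n (\<lambda>i. y i - u i) \<le> s}"

lemma vecs_upd: "j < n \<Longrightarrow> z \<in> vecs n \<Longrightarrow> z(j := x) \<in> vecs n"
  unfolding vecs_def using PiE_fun_upd[of x "\<lambda>_. UNIV" j z "{..<n}"] by (simp add: insert_absorb)

lemma finite_vecs: "finite (vecs n :: (nat \<Rightarrow> 'a::finite) set)"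
  unfolding vecs_def by (intro finite_PiE) auto

lemma Gs_mem:
  fixes z :: "nat \<Rightarrow> 'a::{field,finite}"
  assumes sf: "subfield F" and j: "j < n" and z: "z j = 0" and p: "p j = 0"
  shows "z(j:=x) \<in> Gs F n r s (p(j:=b)) \<longleftrightarrow>
    z(j:=x) \<in> vecs n \<and> x \<in> fib (spn F z {..<n}) (spn F (\<lambda>i. z i - p i) {..<n}) (rk F n z) (rk F n (\<lambda>i. z i - p i)) r s b"
proof -
  have e1: "(\<lambda>i. (z(j:=x)) i - (p(j:=b)) i) = (\<lambda>i. z i - p i)(j := x - b)" by auto
  have z2: "(\<lambda>i. z i - p i) j = 0" using z p by simp
  have r1: "rk F n (z(j:=x)) = rk F n z + (if x \<in> spn F z {..<n} then 0 else 1)"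
    by (rule rk_upd[where z=z and j=j, OF sf j z])
  have r2: "rk F n (\<lambda>i. (z(j:=x)) i - (p(j:=b)) i) = rk F n (\<lambda>i. z i - p i) + (if x - b \<in> spn F (\<lambda>i. z i - p i) {..<n} then 0 else 1)"
    unfolding e1 by (rule rk_upd[where z="\<lambda>i. z i - p i" and j=j, OF sf j z2])
  show ?thesis
    unfolding Gs_def fib_def mem_Collect_eq r1 r2 by auto
qed

lemma Gs_card:
  fixes p :: "nat \<Rightarrow> 'a::{field,finite}"
  assumes sf: "subfield F" and j: "j < n" and p: "p j = 0"
  shows "card (Gs F n r s (p(j:=b))) = (\<Sum>z\<in>{z\<in>vecs n. z j = 0}.
     card (fib (spn F z {..<n}) (spn F (\<lambda>i. z i - p i) {..<n}) (rk F n z) (rk F n (\<lambda>i. z i - p i)) r s b))"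
proof -
  let ?Z = "{z\<in>vecs n. z j = (0::'a)}"
  let ?T = "\<lambda>z. fib (spn F z {..<n}) (spn F (\<lambda>i. z i - p i) {..<n}) (rk F n z) (rk F n (\<lambda>i. z i - p i)) r s b"
  let ?h = "\<lambda>(z, x). z(j:=x)"
  have eq: "Gs F n r s (p(j:=b)) = ?h ` (SIGMA z:?Z. ?T z)"
  proof
    show "Gs F n r s (p(j:=b)) \<subseteq> ?h ` (SIGMA z:?Z. ?T z)"
    proof
      fix y assume y: "y \<in> Gs F n r s (p(j:=b))"
      have yv: "y \<in> vecs n" using y unfolding Gs_def by simp
      let ?z = "y(j:=0)"
      have yz: "y = ?z(j := y j)" by simp
      have zZ: "?z \<in> ?Z" using vecs_upd[OF j yv] by simp
      have "y j \<in> ?T ?z" using Gs_mem[where z="?z" and j=j and p=p and x="y j" and r=r and s=s and b=b and F=F and n=n, OF sf j _ p] y yz by simp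
      then have "(?z, y j) \<in> (SIGMA z:?Z. ?T z)" using zZ by blast
      moreover have "y = ?h (?z, y j)" by simp
      ultimately show "y \<in> ?h ` (SIGMA z:?Z. ?T z)" by (rule rev_image_eqI)
    qed
    show "?h ` (SIGMA z:?Z. ?T z) \<subseteq> Gs F n r s (p(j:=b))"
    proof
      fix y assume "y \<in> ?h ` (SIGMA z:?Z. ?T z)"
      then obtain q where q: "q \<in> (SIGMA z:?Z. ?T z)" "y = ?h q" by blast
      obtain z x where "q = (z, x)" by (cases q)
      then have zx: "z \<in> ?Z" "x \<in> ?T z" "y = z(j:=x)" using q by auto
      have "z(j:=x) \<in> vecs n" using vecs_upd[OF j, of z x] zx(1) by blast
      then show "y \<in> Gs F n r s (p(j:=b))"
        using Gs_mem[where z=z and j=j and p=p and x=x and r=r and s=s and b=b and F=F and n=n, OF sf j _ p] zx by simp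
    qed
  qed
  have inj: "inj_on ?h (SIGMA z:?Z. ?T z)"
  proof (rule inj_onI, clarify)
    fix z x z' x' assume h: "z \<in> vecs n" "z j = 0" "z' \<in> vecs n" "z' j = 0" "z(j:=x) = z'(j:=x')"
    have "x = x'" using fun_cong[OF h(5), of j] by simp
    moreover have "z = z'"
    proof
      fix i show "z i = z' i" using fun_cong[OF h(5), of i] h(2,4) by (cases "i = j") auto
    qed
    ultimately show "z = z' \<and> x = x'" by simp
  qed
  have "card (Gs F n r s (p(j:=b))) = card (SIGMA z:?Z. ?T z)" unfolding eq by (rule card_image[OF inj])
  also have "\<dots> = (\<Sum>z\<in>?Z. card (?T z))"
  proof (rule card_SigmaI)
    have "finite (vecs n :: (nat \<Rightarrow> 'a) set)" by (rule finite_vecs)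
    then show "finite ?Z" by (rule finite_subset[rotated]) blast
  qed simp
  finally show ?thesis .
qed

lemma fiber_step:
  fixes p :: "nat \<Rightarrow> 'a::{field,finite}"
  assumes sf: "subfield F" and j: "j < n" and p: "p j = 0"
  shows "card (Gs F n r s (p(j:=a))) \<le> card (Gs F n r s p)"
    and "a \<in> spn F p {..<n} \<Longrightarrow> card (Gs F n r s p) \<le> card (Gs F n r s (p(j:=a)))"
proof -
  have pp0: "p(j:=0) = p" using p by auto
  have G0: "card (Gs F n r s p) = (\<Sum>z\<in>{z\<in>vecs n. z j = 0}.
     card (fib (spn F z {..<n}) (spn F (\<lambda>i. z i - p i) {..<n}) (rk F n z) (rk F n (\<lambda>i. z i - p i)) r s 0))"
    using Gs_card[where p=p and j=j and r=r and s=s and b=0, OF sf j p] pp0 by simp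
  show "card (Gs F n r s (p(j:=a))) \<le> card (Gs F n r s p)"
    unfolding G0 Gs_card[where p=p and j=j and r=r and s=s and b=a, OF sf j p]
    by (rule sum_mono, rule fib_card_le[OF sf spn_subsp[OF sf] spn_subsp[OF sf]])
  assume a: "a \<in> spn F p {..<n}"
  then obtain c where c: "a = (\<Sum>i<n. c i * p i)" "\<forall>i\<in>{..<n}. c i \<in> F" unfolding spn_def by blast
  show "card (Gs F n r s p) \<le> card (Gs F n r s (p(j:=a)))"
    unfolding G0 Gs_card[where p=p and j=j and r=r and s=s and b=a, OF sf j p]
  proof (rule sum_mono)
    fix z :: "nat \<Rightarrow> 'a" assume "z \<in> {z\<in>vecs n. z j = 0}"
    let ?w = "\<Sum>i<n. c i * z i"
    let ?w2 = "\<Sum>i<n. (- c i) * (z i - p i)"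
    have w: "?w \<in> spn F z {..<n}" unfolding spn_def using c(2) by blast
    have "\<forall>i\<in>{..<n}. - c i \<in> F" using c(2) sfE(5)[OF sf] by blast
    then have "\<exists>c'. ?w2 = (\<Sum>i<n. c' i * (z i - p i)) \<and> (\<forall>i\<in>{..<n}. c' i \<in> F)"
      by (intro exI[of _ "\<lambda>i. - c i"]) simp
    then have w2: "?w2 \<in> spn F (\<lambda>i. z i - p i) {..<n}" by (simp add: spn_def)
    have "?w + ?w2 = (\<Sum>i<n. c i * z i + (- c i) * (z i - p i))" by (rule sum.distrib[symmetric])
    also have "\<dots> = a" unfolding c(1) by (rule sum.cong) (simp_all add: algebra_simps)
    finally have "a = ?w + ?w2" by simp
    then show "card (fib (spn F z {..<n}) (spn F (\<lambda>i. z i - p i) {..<n}) (rk F n z) (rk F n (\<lambda>i. z i - p i)) r s 0)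
       \<le> card (fib (spn F z {..<n}) (spn F (\<lambda>i. z i - p i) {..<n}) (rk F n z) (rk F n (\<lambda>i. z i - p i)) r s a)"
      by (rule fib_card_ge[OF sf spn_subsp[OF sf] spn_subsp[OF sf] w w2])
  qed
qed

definition zo :: "nat set \<Rightarrow> (nat \<Rightarrow> 'a::zero) \<Rightarrow> nat \<Rightarrow> 'a" where
  "zo D u = (\<lambda>i. if i \<in> D then 0 else u i)"

lemma zero_le:
  fixes u :: "nat \<Rightarrow> 'a::{field,finite}"
  assumes sf: "subfield F" and "finite D" "D \<subseteq> {..<n}"
  shows "card (Gs F n r s u) \<le> card (Gs F n r s (zo D u))"
  using assms(2,3)
proof (induction D rule: finite_induct)
  case empty
  have "zo {} u = u" unfolding zo_def by simp
  then show ?case by simp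
next
  case (insert j D)
  let ?u1 = "zo D u"
  have j: "j < n" using insert by auto
  have e: "zo (insert j D) u = ?u1(j:=0)" unfolding zo_def by auto
  have e2: "(?u1(j:=0))(j := ?u1 j) = ?u1" by simp
  have "card (Gs F n r s ((?u1(j:=0))(j := ?u1 j))) \<le> card (Gs F n r s (?u1(j:=0)))"
    by (rule fiber_step(1)[OF sf j]) simp
  then have "card (Gs F n r s ?u1) \<le> card (Gs F n r s (zo (insert j D) u))" using e e2 by simp
  moreover have "card (Gs F n r s u) \<le> card (Gs F n r s ?u1)" using insert by simp
  ultimately show ?case by linarith
qed

lemma zero_eq:
  fixes u :: "nat \<Rightarrow> 'a::{field,finite}"
  assumes sf: "subfield F" and "finite D" "D \<subseteq> {..<n}" and J: "J \<subseteq> {..<n}" "D \<inter> J = {}"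
    and sp: "\<forall>j\<in>D. u j \<in> spn F u J"
  shows "card (Gs F n r s (zo D u)) = card (Gs F n r s u)"
  using assms(2,3,5,6)
proof (induction D rule: finite_induct)
  case empty
  have "zo {} u = u" unfolding zo_def by simp
  then show ?case by simp
next
  case (insert j D)
  let ?u1 = "zo D u"
  let ?p = "?u1(j:=0)"
  have j: "j < n" using insert by auto
  have e: "zo (insert j D) u = ?p" unfolding zo_def by auto
  have e2: "?p(j := ?u1 j) = ?u1" by simp
  have u1j: "?u1 j = u j" using insert(2) unfolding zo_def by simp
  have "spn F u J = spn F ?p J"
    by (rule spn_cong) (use insert(5) in \<open>auto simp: zo_def\<close>)
  also have "\<dots> \<subseteq> spn F ?p {..<n}" by (rule spn_mono[OF sf J(1)]) simp
  finally have a: "?u1 j \<in> spn F ?p {..<n}" using insert(6) u1j by auto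
  have "card (Gs F n r s (?p(j := ?u1 j))) \<le> card (Gs F n r s ?p)"
    by (rule fiber_step(1)[OF sf j]) simp
  moreover have "card (Gs F n r s ?p) \<le> card (Gs F n r s (?p(j := ?u1 j)))"
    by (rule fiber_step(2)[OF sf j _ a]) simp
  ultimately have "card (Gs F n r s (zo (insert j D) u)) = card (Gs F n r s ?u1)" using e e2 by simp
  moreover have "card (Gs F n r s ?u1) = card (Gs F n r s u)" using insert by auto
  ultimately show ?case by simp
qed

definition lin :: "'a::field set \<Rightarrow> ('a \<Rightarrow> 'a) \<Rightarrow> bool" where
  "lin F \<phi> \<longleftrightarrow> (\<forall>a b. \<phi> (a + b) = \<phi> a + \<phi> b) \<and> (\<forall>k\<in>F. \<forall>a. \<phi> (k * a) = k * \<phi> a)"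

lemma lin_zero: "lin F \<phi> \<Longrightarrow> \<phi> 0 = 0"
proof -
  assume "lin F \<phi>"
  then have "\<phi> (0 + 0) = \<phi> 0 + \<phi> 0" unfolding lin_def by blast
  then have "\<phi> 0 = \<phi> 0 + \<phi> 0" by (simp only: add_0_left)
  then show "\<phi> 0 = 0" by (simp only: add_cancel_right_right)
qed

lemma lin_diff: "lin F \<phi> \<Longrightarrow> \<phi> (a - b) = \<phi> a - \<phi> b"
proof -
  assume "lin F \<phi>"
  then have "\<phi> ((a - b) + b) = \<phi> (a - b) + \<phi> b" unfolding lin_def by blast
  then show ?thesis by (simp add: eq_diff_eq)
qed

lemma lin_sum:
  assumes "lin F \<phi>" "\<forall>i\<in>I. c i \<in> F"
  shows "\<phi> (\<Sum>i\<in>I. c i * x i) = (\<Sum>i\<in>I. c i * \<phi> (x i))"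
  using assms(2)
proof (induction I rule: infinite_finite_induct)
  case (infinite A) then show ?case using lin_zero[OF assms(1)] by simp
next
  case empty then show ?case using lin_zero[OF assms(1)] by simp
next
  case (insert a A)
  then show ?case using assms(1) unfolding lin_def by simp
qed

lemma indep_lin:
  assumes "lin F \<phi>" "inj \<phi>"
  shows "indep F (\<lambda>i. \<phi> (x i)) I \<longleftrightarrow> indep F x I"
proof -
  have "\<And>c. (\<forall>i\<in>I. c i \<in> F) \<Longrightarrow> ((\<Sum>i\<in>I. c i * \<phi> (x i)) = 0) = ((\<Sum>i\<in>I. c i * x i) = 0)"
  proof -
    fix c assume c: "\<forall>i\<in>I. c i \<in> F"
    have "(\<Sum>i\<in>I. c i * \<phi> (x i)) = \<phi> (\<Sum>i\<in>I. c i * x i)" using lin_sum[OF assms(1) c] by simp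
    moreover have "\<phi> v = 0 \<longleftrightarrow> v = 0" for v
    proof
      assume "\<phi> v = 0" then have "\<phi> v = \<phi> 0" using lin_zero[OF assms(1)] by simp
      then show "v = 0" by (rule injD[OF assms(2)])
    qed (use lin_zero[OF assms(1)] in simp)
    ultimately show "((\<Sum>i\<in>I. c i * \<phi> (x i)) = 0) = ((\<Sum>i\<in>I. c i * x i) = 0)" by simp
  qed
  then show ?thesis unfolding indep_def by blast
qed

lemma indep_reindex:
  assumes "inj_on \<pi> I"
  shows "indep F (\<lambda>i. x (\<pi> i)) I \<longleftrightarrow> indep F x (\<pi> ` I)"
proof
  assume h: "indep F (\<lambda>i. x (\<pi> i)) I"
  show "indep F x (\<pi> ` I)" unfolding indep_def
  proof (intro allI impI)
    fix c assume c: "\<forall>k\<in>\<pi> ` I. c k \<in> F" and s: "(\<Sum>k\<in>\<pi> ` I. c k * x k) = 0"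
    have "(\<Sum>i\<in>I. c (\<pi> i) * x (\<pi> i)) = 0" using s sum.reindex[OF assms, of "\<lambda>k. c k * x k"] by simp
    moreover have "\<forall>i\<in>I. c (\<pi> i) \<in> F" using c by simp
    ultimately have "\<forall>i\<in>I. c (\<pi> i) = 0" using indepD[OF h, of "\<lambda>i. c (\<pi> i)"] by blast
    then show "\<forall>k\<in>\<pi> ` I. c k = 0" by simp
  qed
next
  assume h: "indep F x (\<pi> ` I)"
  show "indep F (\<lambda>i. x (\<pi> i)) I" unfolding indep_def
  proof (intro allI impI)
    fix c assume c: "\<forall>i\<in>I. c i \<in> F" and s: "(\<Sum>i\<in>I. c i * x (\<pi> i)) = 0"
    let ?d = "\<lambda>k. c (inv_into I \<pi> k)"
    have d: "\<And>i. i \<in> I \<Longrightarrow> ?d (\<pi> i) = c i" using assms by simp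
    have "(\<Sum>k\<in>\<pi> ` I. ?d k * x k) = (\<Sum>i\<in>I. ?d (\<pi> i) * x (\<pi> i))"
      using sum.reindex[OF assms, of "\<lambda>k. ?d k * x k"] by simp
    also have "\<dots> = (\<Sum>i\<in>I. c i * x (\<pi> i))" by (rule sum.cong) (simp_all add: d)
    finally have "(\<Sum>k\<in>\<pi> ` I. ?d k * x k) = 0" using s by simp
    moreover have "\<forall>k\<in>\<pi> ` I. ?d k \<in> F" using c d by auto
    ultimately have "\<forall>k\<in>\<pi> ` I. ?d k = 0" using indepD[OF h, of ?d] by blast
    then show "\<forall>i\<in>I. c i = 0" using d by auto
  qed
qed

lemma vecs_iff: "y \<in> vecs n \<longleftrightarrow> (\<forall>i. n \<le> i \<longrightarrow> y i = undefined)"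
  unfolding vecs_def PiE_def extensional_def by auto

definition sig :: "('a \<Rightarrow> 'a) \<Rightarrow> (nat \<Rightarrow> nat) \<Rightarrow> nat \<Rightarrow> (nat \<Rightarrow> 'a) \<Rightarrow> nat \<Rightarrow> 'a" where
  "sig \<phi> \<pi> n y = (\<lambda>i. if i < n then \<phi> (y (\<pi> i)) else undefined)"

lemma sig_vecs: "sig \<phi> \<pi> n y \<in> vecs n"
  unfolding vecs_iff sig_def by simp

lemma rk_sig:
  fixes y :: "nat \<Rightarrow> 'a::{field,finite}"
  assumes sf: "subfield F" and l: "lin F \<phi>" "inj \<phi>" and p: "bij_betw \<pi> {..<n} {..<n}"
  shows "rk F n (sig \<phi> \<pi> n y) = rk F n y"
proof -
  have key: "lin_indep_over F (sig \<phi> \<pi> n y) I \<longleftrightarrow> indep F y (\<pi> ` I)" if I: "I \<subseteq> {..<n}" for I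
  proof -
    have inj: "inj_on \<pi> I" using inj_on_subset[OF bij_betw_imp_inj_on[OF p] I] .
    have "lin_indep_over F (sig \<phi> \<pi> n y) I \<longleftrightarrow> indep F (\<lambda>i. \<phi> (y (\<pi> i))) I"
      unfolding lin_indep_over_eq by (rule indep_cong) (use I in \<open>auto simp: sig_def\<close>)
    also have "\<dots> \<longleftrightarrow> indep F (\<lambda>i. y (\<pi> i)) I" by (rule indep_lin[OF l])
    also have "\<dots> \<longleftrightarrow> indep F y (\<pi> ` I)" by (rule indep_reindex[OF inj])
    finally show ?thesis .
  qed
  have "{card I | I. I \<subseteq> {..<n} \<and> lin_indep_over F (sig \<phi> \<pi> n y) I} = {card I | I. I \<subseteq> {..<n} \<and> lin_indep_over F y I}"
  proof
    show "{card I | I. I \<subseteq> {..<n} \<and> lin_indep_over F (sig \<phi> \<pi> n y) I} \<subseteq> {card I | I. I \<subseteq> {..<n} \<and> lin_indep_over F y I}"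
    proof
      fix m assume "m \<in> {card I | I. I \<subseteq> {..<n} \<and> lin_indep_over F (sig \<phi> \<pi> n y) I}"
      then obtain I where I: "m = card I" "I \<subseteq> {..<n}" "lin_indep_over F (sig \<phi> \<pi> n y) I" by blast
      have "card (\<pi> ` I) = card I" using inj_on_subset[OF bij_betw_imp_inj_on[OF p] I(2)] by (rule card_image)
      moreover have "\<pi> ` I \<subseteq> {..<n}" using I(2) p unfolding bij_betw_def by blast
      moreover have "lin_indep_over F y (\<pi> ` I)" using key[OF I(2)] I(3) unfolding lin_indep_over_eq by simp
      ultimately show "m \<in> {card I | I. I \<subseteq> {..<n} \<and> lin_indep_over F y I}" using I(1)
        by (intro CollectI exI[of _ "\<pi> ` I"]) simp
    qed
    show "{card I | I. I \<subseteq> {..<n} \<and> lin_indep_over F y I} \<subseteq> {card I | I. I \<subseteq> {..<n} \<and> lin_indep_over F (sig \<phi> \<pi> n y) I}"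
    proof
      fix m assume "m \<in> {card I | I. I \<subseteq> {..<n} \<and> lin_indep_over F y I}"
      then obtain I' where I': "m = card I'" "I' \<subseteq> {..<n}" "lin_indep_over F y I'" by blast
      let ?I = "{i \<in> {..<n}. \<pi> i \<in> I'}"
      have img: "\<pi> ` ?I = I'"
      proof
        show "\<pi> ` ?I \<subseteq> I'" by blast
        show "I' \<subseteq> \<pi> ` ?I"
        proof
          fix k assume "k \<in> I'"
          then have "k \<in> \<pi> ` {..<n}" using I'(2) p unfolding bij_betw_def by blast
          then obtain i where "i \<in> {..<n}" "k = \<pi> i" by blast
          then show "k \<in> \<pi> ` ?I" using \<open>k \<in> I'\<close> by blast
        qed
      qed
      have sub: "?I \<subseteq> {..<n}" by blast
      have "card (\<pi> ` ?I) = card ?I" using inj_on_subset[OF bij_betw_imp_inj_on[OF p] sub] by (rule card_image)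
      then have "m = card ?I" using img I'(1) by simp
      moreover have "lin_indep_over F (sig \<phi> \<pi> n y) ?I" using key[OF sub] img I'(3) unfolding lin_indep_over_eq by simp
      ultimately show "m \<in> {card I | I. I \<subseteq> {..<n} \<and> lin_indep_over F (sig \<phi> \<pi> n y) I}" using sub
        by (intro CollectI exI[of _ "?I"]) simp
    qed
  qed
  then show ?thesis unfolding rk_def by simp
qed

lemma Gs_sig:
  fixes u :: "nat \<Rightarrow> 'a::{field,finite}"
  assumes sf: "subfield F" and l: "lin F \<phi>" "inj \<phi>" and p: "bij_betw \<pi> {..<n} {..<n}"
  shows "card (Gs F n r s (sig \<phi> \<pi> n u)) = card (Gs F n r s u)"
proof -
  let ?s = "sig \<phi> \<pi> n"
  have surjphi: "surj \<phi>" using finite_UNIV_inj_surj[OF finite_UNIV l(2)] .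
  have pinj: "inj_on \<pi> {..<n}" using p bij_betw_imp_inj_on by blast
  have pimg: "\<pi> ` {..<n} = {..<n}" using p bij_betw_imp_surj_on by blast
  have diff: "rk F n (\<lambda>i. ?s y i - ?s u i) = rk F n (\<lambda>i. y i - u i)" for y
  proof -
    have "rk F n (\<lambda>i. ?s y i - ?s u i) = rk F n (?s (\<lambda>i. y i - u i))"
      by (rule rk_cong[OF sf]) (simp add: sig_def lin_diff[OF l(1)])
    also have "\<dots> = rk F n (\<lambda>i. y i - u i)" by (rule rk_sig[OF sf l p])
    finally show ?thesis .
  qed
  have inj: "inj_on ?s (vecs n)"
  proof (rule inj_onI)
    fix y y' assume y: "y \<in> vecs n" "y' \<in> vecs n" and e: "?s y = ?s y'"
    show "y = y'"
    proof
      fix k show "y k = y' k"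
      proof (cases "k < n")
        case True
        then have "k \<in> \<pi> ` {..<n}" using pimg by simp
        then obtain i where i: "i < n" "k = \<pi> i" by blast
        have "\<phi> (y k) = \<phi> (y' k)" using fun_cong[OF e, of i] i by (simp add: sig_def)
        then show ?thesis by (rule injD[OF l(2)])
      next
        case False then show ?thesis using y unfolding vecs_iff by simp
      qed
    qed
  qed
  have img: "?s ` Gs F n r s u = Gs F n r s (?s u)"
  proof
    show "?s ` Gs F n r s u \<subseteq> Gs F n r s (?s u)"
    proof
      fix z assume "z \<in> ?s ` Gs F n r s u"
      then obtain y where y: "y \<in> Gs F n r s u" "z = ?s y" by blast
      have "rk F n y \<le> r" "rk F n (\<lambda>i. y i - u i) \<le> s" using y(1) unfolding Gs_def by simp_all
      moreover have "rk F n z = rk F n y" using y(2) rk_sig[OF sf l p, of y] by simp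
      moreover have "rk F n (\<lambda>i. z i - ?s u i) = rk F n (\<lambda>i. y i - u i)" using y(2) diff[of y] by simp
      moreover have "z \<in> vecs n" using y(2) sig_vecs by simp
      ultimately show "z \<in> Gs F n r s (?s u)" unfolding Gs_def by simp
    qed
    show "Gs F n r s (?s u) \<subseteq> ?s ` Gs F n r s u"
    proof
      fix y assume y: "y \<in> Gs F n r s (?s u)"
      let ?y0 = "\<lambda>k. if k < n then inv \<phi> (y (inv_into {..<n} \<pi> k)) else undefined"
      have y0v: "?y0 \<in> vecs n" unfolding vecs_iff by simp
      have yv: "y \<in> vecs n" using y unfolding Gs_def by simp
      have ey: "?s ?y0 = y"
      proof
        fix i show "?s ?y0 i = y i"
        proof (cases "i < n")
          case True
          then have "\<pi> i < n" using pimg by blast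
          moreover have "inv_into {..<n} \<pi> (\<pi> i) = i" using True pinj by (simp add: inv_into_f_f)
          ultimately show ?thesis using True surj_f_inv_f[OF surjphi] by (simp add: sig_def)
        next
          case False then show ?thesis using yv unfolding vecs_iff by (simp add: sig_def)
        qed
      qed
      have r1: "rk F n ?y0 = rk F n y" using rk_sig[OF sf l p, of ?y0] ey by simp
      have r2: "rk F n (\<lambda>i. ?y0 i - u i) = rk F n (\<lambda>i. y i - ?s u i)" using diff[of ?y0] ey by simp
      have "rk F n y \<le> r" "rk F n (\<lambda>i. y i - ?s u i) \<le> s" using y unfolding Gs_def by simp_all
      then have "?y0 \<in> Gs F n r s u" unfolding Gs_def using y0v r1 r2 by simp
      then show "y \<in> ?s ` Gs F n r s u" by (rule image_eqI[where f="?s" and x="?y0", OF ey[symmetric]])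
    qed
  qed
  have "inj_on ?s (Gs F n r s u)" by (rule inj_on_subset[OF inj]) (auto simp: Gs_def)
  then have "card (?s ` Gs F n r s u) = card (Gs F n r s u)" by (rule card_image)
  then show ?thesis using img by simp
qed

lemma sum_delta_mult:
  fixes f :: "'i \<Rightarrow> 'a::field"
  assumes "finite X" "a \<in> X"
  shows "(\<Sum>e\<in>X. (if e = a then 1 else 0) * f e) = f a"
proof -
  have "(\<Sum>e\<in>X. (if e = a then 1 else 0) * f e) = (\<Sum>e\<in>X. if e = a then f e else 0)"
    by (rule sum.cong) auto
  also have "\<dots> = f a" using assms by simp
  finally show ?thesis .
qed

lemma indep_inj:
  fixes x :: "'i \<Rightarrow> 'a::field"
  assumes sf: "subfield F" and fin: "finite J" and ind: "indep F x J"
  shows "inj_on x J"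
proof (rule inj_onI, rule ccontr)
  fix i k assume ik: "i \<in> J" "k \<in> J" "x i = x k" "i \<noteq> k"
  let ?c = "\<lambda>l. if l = i then 1 else if l = k then - 1 else (0::'a)"
  have "\<And>l. ?c l * x l = (if l = i then x l else 0) - (if l = k then x l else 0)"
    using ik by auto
  then have "(\<Sum>l\<in>J. ?c l * x l) = (\<Sum>l\<in>J. (if l = i then x l else 0) - (if l = k then x l else 0))"
    by simp
  also have "\<dots> = x i - x k" using fin ik by (simp add: sum_subtractf)
  finally have s: "(\<Sum>l\<in>J. ?c l * x l) = 0" using ik by simp
  have "\<forall>l\<in>J. ?c l \<in> F" using sfE(1,2,5)[OF sf] by auto
  then have "\<forall>l\<in>J. ?c l = 0" using indepD[OF ind, of ?c] s by blast
  then show False using ik by auto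
qed

lemma basis_ext:
  fixes X0 :: "'a::{field,finite} set"
  assumes sf: "subfield F" and ind: "indep F id X0"
  shows "\<exists>X. X0 \<subseteq> X \<and> indep F id X \<and> spn F id X = UNIV"
proof -
  let ?C = "{X. X0 \<subseteq> X \<and> indep F id X}"
  have finC: "finite ?C" by (rule finite_subset[of _ "Pow UNIV"]) auto
  have "X0 \<in> ?C" using ind by simp
  then have ne: "card ` ?C \<noteq> {}" by blast
  have "Max (card ` ?C) \<in> card ` ?C" using Max_in[OF finite_imageI[OF finC] ne] .
  then obtain X where X: "X \<in> ?C" "card X = Max (card ` ?C)" by auto
  have "v \<in> spn F id X" for v
  proof (rule ccontr)
    assume nv: "v \<notin> spn F id X"
    have "v \<notin> X" using spn_mem[OF sf, of v X id] nv by auto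
    then have "indep F id (insert v X)" using indep_insert[OF sf finite, of v X id] X(1) nv by simp
    then have "insert v X \<in> ?C" using X(1) by auto
    then have "card (insert v X) \<le> Max (card ` ?C)" using Max_ge[OF finite_imageI[OF finC]] by blast
    then show False using X(2) \<open>v \<notin> X\<close> by simp
  qed
  then show ?thesis using X(1) by blast
qed

lemma phi_exists:
  fixes x y :: "nat \<Rightarrow> 'a::{field,finite}"
  assumes sf: "subfield F" and fin: "finite J" and ix: "indep F x J" and iy: "indep F y J"
  shows "\<exists>\<phi>. lin F \<phi> \<and> inj \<phi> \<and> (\<forall>j\<in>J. \<phi> (x j) = y j)"
proof -
  have injx: "inj_on x J" by (rule indep_inj[OF sf fin ix])
  have injy: "inj_on y J" by (rule indep_inj[OF sf fin iy])
  have iX0: "indep F id (x ` J)" using indep_reindex[OF injx, of F id] ix by simp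
  have iY0: "indep F id (y ` J)" using indep_reindex[OF injy, of F id] iy by simp
  obtain X where X: "x ` J \<subseteq> X" "indep F id X" "spn F id X = UNIV" using basis_ext[OF sf iX0] by blast
  obtain Y where Y: "y ` J \<subseteq> Y" "indep F id Y" "spn F id Y = UNIV" using basis_ext[OF sf iY0] by blast
  have "card F ^ card X = card (UNIV :: 'a set)" using card_spn[OF sf finite finite X(2)] X(3) by simp
  moreover have "card F ^ card Y = card (UNIV :: 'a set)" using card_spn[OF sf finite finite Y(2)] Y(3) by simp
  ultimately have cXY: "card X = card Y" using power_inject_exp[OF card_F_gt1[OF sf]] by metis
  have "card (X - x ` J) = card (Y - y ` J)"
    using card_Diff_subset[OF finite X(1)] card_Diff_subset[OF finite Y(1)] cXY
      card_image[OF injx] card_image[OF injy] by simp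
  then obtain \<beta>' where b': "bij_betw \<beta>' (X - x ` J) (Y - y ` J)"
    using finite_same_card_bij[OF finite finite] by blast
  define \<beta> where "\<beta> e = (if e \<in> x ` J then y (inv_into J x e) else \<beta>' e)" for e
  have b1: "bij_betw (\<lambda>e. y (inv_into J x e)) (x ` J) (y ` J)"
  proof -
    have "bij_betw (inv_into J x) (x ` J) J" by (rule bij_betw_inv_into[OF inj_on_imp_bij_betw[OF injx]])
    moreover have "bij_betw y J (y ` J)" by (rule inj_on_imp_bij_betw[OF injy])
    ultimately show ?thesis using bij_betw_trans unfolding comp_def by blast
  qed
  have "bij_betw \<beta> (x ` J \<union> (X - x ` J)) (y ` J \<union> (Y - y ` J))"
  proof (rule bij_betw_combine)
    show "bij_betw \<beta> (x ` J) (y ` J)" using b1 by (rule bij_betw_cong[THEN iffD1, rotated]) (simp add: \<beta>_def)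
    show "bij_betw \<beta> (X - x ` J) (Y - y ` J)" using b' by (rule bij_betw_cong[THEN iffD1, rotated]) (simp add: \<beta>_def)
  qed blast
  moreover have "x ` J \<union> (X - x ` J) = X" "y ` J \<union> (Y - y ` J) = Y" using X(1) Y(1) by blast+
  ultimately have bb: "bij_betw \<beta> X Y" by simp
  have iB: "indep F \<beta> X"
    using indep_reindex[OF bij_betw_imp_inj_on[OF bb], of F id] bij_betw_imp_surj_on[OF bb] Y(2) by simp
  let ?E = "PiE X (\<lambda>_. F)"
  let ?cb = "\<lambda>c. \<Sum>e\<in>X. c e * id e"
  have cinj: "inj_on ?cb ?E" by (rule comb_inj[OF sf X(2)])
  have cimg: "?cb ` ?E = UNIV" using spn_image[of F id X] X(3) by simp
  define coef where "coef v = the_inv_into ?E ?cb v" for v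
  have cE: "coef v \<in> ?E" for v unfolding coef_def by (rule the_inv_into_into[OF cinj]) (use cimg in auto)
  have cS: "(\<Sum>e\<in>X. coef v e * e) = v" for v
    using f_the_inv_into_f[OF cinj, of v] cimg unfolding coef_def by simp
  have cU: "c \<in> ?E \<Longrightarrow> (\<Sum>e\<in>X. c e * e) = v \<Longrightarrow> coef v = c" for c v
    using the_inv_into_f_f[OF cinj, of c] unfolding coef_def by simp
  define \<phi> where "\<phi> v = (\<Sum>e\<in>X. coef v e * \<beta> e)" for v
  have cF: "coef v e \<in> F" if "e \<in> X" for v e using cE[of v] that by auto
  have add: "\<phi> (a + b) = \<phi> a + \<phi> b" for a b
  proof -
    let ?c = "restrict (\<lambda>e. coef a e + coef b e) X"
    have "?c \<in> ?E" using cF sfE(3)[OF sf] by auto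
    moreover have "(\<Sum>e\<in>X. ?c e * e) = a + b"
      using cS[of a] cS[of b] by (simp add: sum.distrib distrib_right)
    ultimately have "coef (a + b) = ?c" by (rule cU)
    then show ?thesis unfolding \<phi>_def by (simp add: sum.distrib distrib_right)
  qed
  have hom: "\<phi> (k * a) = k * \<phi> a" if k: "k \<in> F" for k a
  proof -
    let ?c = "restrict (\<lambda>e. k * coef a e) X"
    have "?c \<in> ?E" using cF sfE(4)[OF sf] k by auto
    moreover have "(\<Sum>e\<in>X. ?c e * e) = k * a"
    proof -
      have "(\<Sum>e\<in>X. ?c e * e) = (\<Sum>e\<in>X. k * (coef a e * e))" by (rule sum.cong) (simp_all add: mult.assoc)
      also have "\<dots> = k * (\<Sum>e\<in>X. coef a e * e)" by (rule sum_distrib_left[symmetric])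
      finally show ?thesis using cS[of a] by simp
    qed
    ultimately have "coef (k * a) = ?c" by (rule cU)
    then have "\<phi> (k * a) = (\<Sum>e\<in>X. ?c e * \<beta> e)" unfolding \<phi>_def by simp
    also have "\<dots> = (\<Sum>e\<in>X. k * (coef a e * \<beta> e))" by (rule sum.cong) (simp_all add: mult.assoc)
    also have "\<dots> = k * \<phi> a" unfolding \<phi>_def by (rule sum_distrib_left[symmetric])
    finally show ?thesis .
  qed
  have "lin F \<phi>" unfolding lin_def using add hom by blast
  moreover have "inj \<phi>"
  proof (rule injI)
    fix a b assume "\<phi> a = \<phi> b"
    then have "(\<Sum>e\<in>X. coef a e * \<beta> e) = (\<Sum>e\<in>X. coef b e * \<beta> e)" unfolding \<phi>_def .
    moreover have i: "inj_on (\<lambda>c. \<Sum>e\<in>X. c e * \<beta> e) ?E" by (rule comb_inj[OF sf iB])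
    ultimately have "coef a = coef b" using cE[of a] cE[of b] unfolding inj_on_def by blast
    then have "(\<Sum>e\<in>X. coef a e * e) = (\<Sum>e\<in>X. coef b e * e)" by simp
    then show "a = b" unfolding cS .
  qed
  moreover have "\<phi> (x j) = y j" if j: "j \<in> J" for j
  proof -
    have xj: "x j \<in> X" using X(1) j by blast
    let ?c = "restrict (\<lambda>e. if e = x j then 1 else 0) X"
    have "?c \<in> ?E" using sfE(1,2)[OF sf] by auto
    moreover have "(\<Sum>e\<in>X. ?c e * e) = x j"
      using sum_delta_mult[OF finite xj, of id] by simp
    ultimately have "coef (x j) = ?c" by (rule cU)
    then have "\<phi> (x j) = \<beta> (x j)" unfolding \<phi>_def using sum_delta_mult[OF finite xj, of \<beta>] by simp
    also have "\<dots> = y j" unfolding \<beta>_def using j injx by simp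
    finally show ?thesis .
  qed
  ultimately show ?thesis by blast
qed

lemma lin_uminus: "lin F (uminus :: 'a::field \<Rightarrow> 'a)"
  unfolding lin_def by simp

lemma rk_neg: "rk F n (\<lambda>i. - x i) = rk F n (x :: nat \<Rightarrow> 'a::field)"
proof -
  have "\<And>I. lin_indep_over F (\<lambda>i. - x i) I = lin_indep_over F x I"
  proof -
    fix I
    have "inj (uminus :: 'a \<Rightarrow> 'a)" by (rule injI) simp
    from indep_lin[OF lin_uminus this, where x=x and I=I] show "lin_indep_over F (\<lambda>i. - x i) I = lin_indep_over F x I"
      unfolding lin_indep_over_eq by simp
  qed
  then show ?thesis unfolding rk_def by simp
qed

lemma Gs_cong:
  fixes u :: "nat \<Rightarrow> 'a::{field,finite}"
  assumes sf: "subfield F" and "\<And>i. i < n \<Longrightarrow> u i = u' i"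
  shows "Gs F n r s u = Gs F n r s u'"
proof -
  have "rk F n (\<lambda>i. y i - u i) = rk F n (\<lambda>i. y i - u' i)" for y
    by (rule rk_cong[OF sf]) (simp add: assms(2))
  then show ?thesis unfolding Gs_def by simp
qed

lemma indep_subset:
  assumes "indep F x I" "I0 \<subseteq> I" "finite I" "0 \<in> F"
  shows "indep F x I0"
  unfolding indep_def
proof (intro allI impI)
  fix c assume c: "\<forall>i\<in>I0. c i \<in> F" and s: "(\<Sum>i\<in>I0. c i * x i) = 0"
  let ?c = "\<lambda>i. if i \<in> I0 then c i else 0"
  have "(\<Sum>i\<in>I. ?c i * x i) = (\<Sum>i\<in>I. if i \<in> I0 then c i * x i else 0)" by (rule sum.cong) auto
  also have "\<dots> = (\<Sum>i\<in>I \<inter> I0. c i * x i)" using sum.inter_restrict[OF assms(3)] by metis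
  also have "I \<inter> I0 = I0" using assms(2) by blast
  finally have "(\<Sum>i\<in>I. ?c i * x i) = 0" using s by simp
  moreover have "\<forall>i\<in>I. ?c i \<in> F" using c assms(4) by auto
  ultimately have "\<forall>i\<in>I. ?c i = 0" using indepD[OF assms(1), of ?c] by blast
  then show "\<forall>i\<in>I0. c i = 0" using assms(2) by (metis subsetD)
qed

lemma ball_Gs:
  fixes c1 c2 :: "nat \<Rightarrow> 'a::{field,finite}"
  assumes sf: "subfield F"
  shows "card (rank_ball F n r c1 \<inter> rank_ball F n s c2) = card (Gs F n r s (\<lambda>i. c2 i - c1 i))"
proof -
  let ?u = "\<lambda>i. c2 i - c1 i"
  let ?h = "\<lambda>y. restrict (\<lambda>i. y i - c1 i) {..<n}"
  have r1: "rank_dist F n c1 y = rk F n (?h y)" for y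
  proof -
    have "rank_dist F n c1 y = rk F n (\<lambda>i. - (?h y i))"
      unfolding rank_dist_def by (rule rk_cong[OF sf]) simp
    then show ?thesis by (simp only: rk_neg)
  qed
  have r2: "rank_dist F n c2 y = rk F n (\<lambda>i. ?h y i - ?u i)" for y
  proof -
    have "rank_dist F n c2 y = rk F n (\<lambda>i. - (?h y i - ?u i))"
      unfolding rank_dist_def by (rule rk_cong[OF sf]) simp
    then show ?thesis by (simp only: rk_neg)
  qed
  have inj: "inj_on ?h (vecs n)"
  proof (rule inj_onI)
    fix y y' assume y: "y \<in> vecs n" "y' \<in> vecs n" and e: "?h y = ?h y'"
    show "y = y'"
    proof
      fix k show "y k = y' k"
      proof (cases "k < n")
        case True then show ?thesis using fun_cong[OF e, of k] by simp
      next
        case False then show ?thesis using y unfolding vecs_iff by simp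
      qed
    qed
  qed
  have img: "?h ` (rank_ball F n r c1 \<inter> rank_ball F n s c2) = Gs F n r s ?u"
  proof
    show "?h ` (rank_ball F n r c1 \<inter> rank_ball F n s c2) \<subseteq> Gs F n r s ?u"
    proof
      fix z assume "z \<in> ?h ` (rank_ball F n r c1 \<inter> rank_ball F n s c2)"
      then obtain y where y: "y \<in> rank_ball F n r c1" "y \<in> rank_ball F n s c2" "z = ?h y" by blast
      have "z \<in> vecs n" unfolding y(3) vecs_iff by simp
      moreover have "rk F n z \<le> r" using y(1) r1[of y] y(3) unfolding rank_ball_def by simp
      moreover have "rk F n (\<lambda>i. z i - ?u i) \<le> s" using y(2) r2[of y] y(3) unfolding rank_ball_def by simp
      ultimately show "z \<in> Gs F n r s ?u" unfolding Gs_def by simp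
    qed
    show "Gs F n r s ?u \<subseteq> ?h ` (rank_ball F n r c1 \<inter> rank_ball F n s c2)"
    proof
      fix z assume z: "z \<in> Gs F n r s ?u"
      let ?y = "restrict (\<lambda>i. z i + c1 i) {..<n}"
      have zv: "z \<in> vecs n" using z unfolding Gs_def by simp
      have hy: "?h ?y = z"
      proof
        fix i show "?h ?y i = z i" using zv unfolding vecs_iff by (cases "i < n") simp_all
      qed
      have yv: "?y \<in> vecs n" unfolding vecs_iff by simp
      have "rk F n z \<le> r" "rk F n (\<lambda>i. z i - ?u i) \<le> s" using z unfolding Gs_def by simp_all
      moreover have "rank_dist F n c1 ?y = rk F n z" using r1[of ?y] unfolding hy .
      moreover have "rank_dist F n c2 ?y = rk F n (\<lambda>i. z i - ?u i)" using r2[of ?y] unfolding hy .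
      ultimately have "?y \<in> rank_ball F n r c1 \<inter> rank_ball F n s c2"
        unfolding rank_ball_def using yv by simp
      then show "z \<in> ?h ` (rank_ball F n r c1 \<inter> rank_ball F n s c2)"
        by (rule image_eqI[where f="?h" and x="?y", OF hy[symmetric]])
    qed
  qed
  have "inj_on ?h (rank_ball F n r c1 \<inter> rank_ball F n s c2)"
    by (rule inj_on_subset[OF inj]) (auto simp: rank_ball_def)
  then have "card (?h ` (rank_ball F n r c1 \<inter> rank_ball F n s c2)) = card (rank_ball F n r c1 \<inter> rank_ball F n s c2)"
    by (rule card_image)
  then show ?thesis using img by simp
qed

lemma Gs_mono:
  fixes u v :: "nat \<Rightarrow> 'a::{field,finite}"
  assumes sf: "subfield F" and lt: "rk F n v < rk F n u"
  shows "card (Gs F n r s u) \<le> card (Gs F n r s v)"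
proof -
  obtain I where I: "I \<subseteq> {..<n}" "indep F u I" "card I = rk F n u"
    using rk_witness[OF sf, of n u] by blast
  obtain J where J: "J \<subseteq> {..<n}" "indep F v J" "card J = rk F n v" "\<forall>j<n. v j \<in> spn F v J"
    using rk_witness[OF sf, of n v] by blast
  have fI: "finite I" "finite J" using I(1) J(1) finite_subset by blast+
  obtain I0 where I0: "I0 \<subseteq> I" "card I0 = card J" "finite I0"
    using obtain_subset_with_card_n[of "card J" I] lt I(3) J(3) by auto
  have I0n: "I0 \<subseteq> {..<n}" using I0(1) I(1) by blast
  let ?w = "zo ({..<n} - I0) u"
  let ?v = "zo ({..<n} - J) v"
  have c1: "card (Gs F n r s u) \<le> card (Gs F n r s ?w)"
    by (rule zero_le[OF sf]) auto
  have c2: "card (Gs F n r s ?v) = card (Gs F n r s v)"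
    by (rule zero_eq[OF sf _ _ J(1)]) (use J(4) in auto)
  have iw: "indep F ?w I0"
    using indep_subset[OF I(2) I0(1) fI(1) sfE(1)[OF sf]] by (subst indep_cong[where y=u]) (auto simp: zo_def)
  have iv: "indep F ?v J"
    using J(2) by (subst indep_cong[where y=v]) (auto simp: zo_def)
  obtain p1 where p1: "bij_betw p1 J I0" using finite_same_card_bij[OF fI(2) I0(3)] I0(2) by metis
  have "card ({..<n} - J) = card ({..<n} - I0)"
    using card_Diff_subset[OF fI(2) J(1)] card_Diff_subset[OF I0(3) I0n] I0(2) by simp
  then obtain p2 where p2: "bij_betw p2 ({..<n} - J) ({..<n} - I0)"
    using finite_same_card_bij[of "{..<n} - J" "{..<n} - I0"] by auto
  define \<pi> where "\<pi> i = (if i \<in> J then p1 i else p2 i)" for i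
  have pJ: "bij_betw \<pi> J I0" using p1 by (rule bij_betw_cong[THEN iffD1, rotated]) (simp add: \<pi>_def)
  have pD: "bij_betw \<pi> ({..<n} - J) ({..<n} - I0)" using p2 by (rule bij_betw_cong[THEN iffD1, rotated]) (simp add: \<pi>_def)
  have "bij_betw \<pi> (J \<union> ({..<n} - J)) (I0 \<union> ({..<n} - I0))"
    by (rule bij_betw_combine[OF pJ pD]) blast
  moreover have "J \<union> ({..<n} - J) = {..<n}" "I0 \<union> ({..<n} - I0) = {..<n}" using J(1) I0n by blast+
  ultimately have pb: "bij_betw \<pi> {..<n} {..<n}" by simp
  have pimg: "\<pi> ` J = I0" using pJ bij_betw_imp_surj_on by blast
  have "indep F (\<lambda>j. ?w (\<pi> j)) J"
    using indep_reindex[OF bij_betw_imp_inj_on[OF pJ], of F ?w] iw pimg by simp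
  then obtain \<phi> where phi: "lin F \<phi>" "inj \<phi>" "\<forall>j\<in>J. \<phi> (?w (\<pi> j)) = ?v j"
    using phi_exists[OF sf fI(2) _ iv] by blast
  have agree: "sig \<phi> \<pi> n ?w i = ?v i" if i: "i < n" for i
  proof (cases "i \<in> J")
    case True then show ?thesis using phi(3) i by (simp add: sig_def)
  next
    case False
    then have "\<pi> i \<in> {..<n} - I0" using pD i bij_betw_imp_surj_on by blast
    then have "?w (\<pi> i) = 0" unfolding zo_def by simp
    then show ?thesis using False i lin_zero[OF phi(1)] by (simp add: sig_def zo_def)
  qed
  have "card (Gs F n r s ?w) = card (Gs F n r s (sig \<phi> \<pi> n ?w))"
    using Gs_sig[OF sf phi(1,2) pb] by simp
  also have "\<dots> = card (Gs F n r s ?v)" using Gs_cong[OF sf agree] by simp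
  finally show ?thesis using c1 c2 by simp
qed

theorem proposition2:
  fixes F :: "'a::{field,finite} set"
    and n r s :: nat
    and c1 c2 c1' c2' :: "nat \<Rightarrow> 'a"
  assumes "subfield F"
    and "r \<le> n" and "s \<le> n"
    and "c1 \<in> vecs n" and "c2 \<in> vecs n" and "c1' \<in> vecs n" and "c2' \<in> vecs n"
    and "rank_dist F n c1 c2 > rank_dist F n c1' c2'"
  shows "card (rank_ball F n r c1 \<inter> rank_ball F n s c2)
           \<le> card (rank_ball F n r c1' \<inter> rank_ball F n s c2')"
proof -
  have d: "rank_dist F n a b = rk F n (\<lambda>i. b i - a i)" for a b :: "nat \<Rightarrow> 'a"
  proof -
    have e: "(\<lambda>i. - (b i - a i)) = (\<lambda>i. a i - b i)" by simp
    have "rk F n (\<lambda>i. - (b i - a i)) = rk F n (\<lambda>i. b i - a i)" by (rule rk_neg)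
    then show ?thesis unfolding rank_dist_def e .
  qed
  have lt: "rk F n (\<lambda>i. c2' i - c1' i) < rk F n (\<lambda>i. c2 i - c1 i)" using assms(8) d by simp
  show ?thesis
    unfolding ball_Gs[OF assms(1)] by (rule Gs_mono[OF assms(1) lt])
qed

end
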